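(* There is a function $\varepsilon:\mathbb{N}\to\mathbb{R}_{\ge0}$ with $\varepsilon(n)\to 0$ as $n\to\infty$ such that every $(1,1)$-criss-cross deletion correcting code $\mathcal{C}\subseteq\{0,1\}^{n\times n}$ satisfies $$|\mathcal{C}|\le (1+\varepsilon(n))\,\frac{2^{n^2}}{2^{2n-1}\cdot \frac{n^2}{2}}.$$ Consequently the redundancy $n^2-\log_2|\mathcal{C}|$ is asymptotically at least $2n-2+2\log_2 n$.
   Context: For a binary array $\mathbf{X}$, $\mathbb{D}_{1,1}(\mathbf{X})$ is the set of arrays obtained from $\mathbf{X}$ by deleting one row and one column. A code $\mathcal{C}\subseteq\{0,1\}^{n\times n}$ is a $(1,1)$-criss-cross deletion correcting code if $\mathbb{D}_{1,1}(\mathbf{X})\cap\mathbb{D}_{1,1}(\mathbf{Y})=\emptyset$ for all distinct $\mathbf{X},\mathbf{Y}\in\mathcal{C}$. The redundancy of $\mathcal{C}$ is $n^2-\log_2|\mathcal{C}|$. *)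

theory Defs
  imports Complex_Main
begin

text \<open>A binary n x n array is represented as a function nat => nat => bool
  that is False outside the index range {0..<n} x {0..<n}.\<close>

definition arrays :: "nat \<Rightarrow> (nat \<Rightarrow> nat \<Rightarrow> bool) set" where
  "arrays n = {X. \<forall>i j. (n \<le> i \<or> n \<le> j) \<longrightarrow> X i j = False}"

definition del_row_col :: "nat \<Rightarrow> (nat \<Rightarrow> nat \<Rightarrow> bool) \<Rightarrow> nat \<Rightarrow> nat \<Rightarrow> (nat \<Rightarrow> nat \<Rightarrow> bool)" where
  "del_row_col n X r c = (\<lambda>i j. if i < n - 1 \<and> j < n - 1
      then X (if i < r then i else Suc i) (if j < c then j else Suc j) else False)"

definition D11 :: "nat \<Rightarrow> (nat \<Rightarrow> nat \<Rightarrow> bool) \<Rightarrow> (nat \<Rightarrow> nat \<Rightarrow> bool) set" where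
  "D11 n X = {del_row_col n X r c | r c. r < n \<and> c < n}"

definition criss_cross_11_code :: "nat \<Rightarrow> (nat \<Rightarrow> nat \<Rightarrow> bool) set \<Rightarrow> bool" where
  "criss_cross_11_code n C \<longleftrightarrow> C \<subseteq> arrays n \<and>
     (\<forall>X\<in>C. \<forall>Y\<in>C. X \<noteq> Y \<longrightarrow> D11 n X \<inter> D11 n Y = {})"

end

theory Submission
  imports Defs "HOL-Real_Asymp.Real_Asymp"
begin


definition skip :: "nat \<Rightarrow> nat \<Rightarrow> nat" where "skip u j = (if j < u then j else Suc j)"

definition seqset :: "'a \<Rightarrow> 'a set \<Rightarrow> nat set \<Rightarrow> ('a \<Rightarrow> 'a \<Rightarrow> bool) \<Rightarrow> nat \<Rightarrow> (nat \<Rightarrow> 'a) set" where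
  "seqset d A B R k = {f. (\<forall>i. k \<le> i \<longrightarrow> f i = d) \<and> (\<forall>i<k. f i \<in> A) \<and> (\<forall>i\<in>B. Suc i < k \<longrightarrow> R (f i) (f (Suc i)))}"

lemma seqset_card:
  fixes A :: "'a set"
  assumes fin: "finite A" and cA: "card A \<le> a" and cR: "\<And>x. x \<in> A \<Longrightarrow> card {y\<in>A. R x y} \<le> b"
  shows "finite (seqset d A B R k) \<and> card (seqset d A B R k) \<le> a^(k - card {i\<in>B. Suc i<k}) * b^(card {i\<in>B. Suc i<k})"
proof (induction k)
  case 0
  have "seqset d A B R 0 = {\<lambda>_. d}" unfolding seqset_def by auto
  then show ?case by simp
next
  case (Suc k)
  define S where "S = seqset d A B R k"
  define S' where "S' = seqset d A B R (Suc k)"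
  define J where "J k = {i\<in>B. Suc i<k}" for k
  define F where "F g = (if 0 < k \<and> k - 1 \<in> B then {y\<in>A. R (g (k-1)) y} else A)" for g :: "nat \<Rightarrow> 'a"
  have finS: "finite S" and cS: "card S \<le> a^(k - card (J k)) * b^(card (J k))"
    using Suc unfolding S_def J_def by auto
  have inj: "inj_on (\<lambda>f. (f(k:=d), f k)) S'"
  proof (rule inj_onI)
    fix f g assume "(f(k:=d), f k) = (g(k:=d), g k)"
    then have "f(k:=d) = g(k:=d)" "f k = g k" by auto
    then show "f = g" by (metis fun_upd_triv fun_upd_upd)
  qed
  have into: "(\<lambda>f. (f(k:=d), f k)) ` S' \<subseteq> Sigma S F"
  proof
    fix p assume "p \<in> (\<lambda>f. (f(k:=d), f k)) ` S'"
    then obtain f where f: "f \<in> S'" and p: "p = (f(k:=d), f k)" by auto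
    have "f(k:=d) \<in> S" using f unfolding S_def S'_def seqset_def by auto
    moreover have "f k \<in> F (f(k:=d))"
    proof -
      have "f k \<in> A" using f unfolding S'_def seqset_def by auto
      moreover have "R (f (k-1)) (f k)" if "0 < k" "k - 1 \<in> B"
      proof -
        have "\<forall>i\<in>B. Suc i < Suc k \<longrightarrow> R (f i) (f (Suc i))" using f unfolding S'_def seqset_def by blast
        then have "R (f (k-1)) (f (Suc (k-1)))" using that by auto
        then show ?thesis using that by simp
      qed
      ultimately show ?thesis unfolding F_def using less_imp_neq by auto
    qed
    ultimately show "p \<in> Sigma S F" using p by auto
  qed
  have finF: "finite (F g)" for g unfolding F_def using fin by auto
  have finSig: "finite (Sigma S F)" using finS finF by auto
  have finS': "finite S'" using finite_imageD[OF finite_subset[OF into finSig] inj] .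
  have "card S' \<le> card (Sigma S F)"
    using card_inj_on_le[OF inj into finSig] .
  also have "\<dots> = (\<Sum>g\<in>S. card (F g))" using card_SigmaI finS finF by blast
  finally have c1: "card S' \<le> (\<Sum>g\<in>S. card (F g))" .
  have Jk: "card (J k) \<le> k"
  proof -
    have "J k \<subseteq> {..<k}" unfolding J_def by auto
    then have "card (J k) \<le> card {..<k}" by (intro card_mono) auto
    then show ?thesis by simp
  qed
  have finJ: "finite (J k)" unfolding J_def by (rule finite_subset[of _ "{..<k}"]) auto
  show ?case
  proof (cases "0 < k \<and> k - 1 \<in> B")
    case True
    have gA: "g (k-1) \<in> A" if "g \<in> S" for g using that True unfolding S_def seqset_def by auto
    have "(\<Sum>g\<in>S. card (F g)) \<le> (\<Sum>g\<in>S. b)"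
      by (rule sum_mono) (use True gA cR in \<open>auto simp: F_def\<close>)
    then have c2: "card S' \<le> card S * b" using c1 by simp
    have JS: "J (Suc k) = insert (k-1) (J k)" "k - 1 \<notin> J k" unfolding J_def using True by auto
    then have cJ: "card (J (Suc k)) = Suc (card (J k))" using finJ by simp
    have "card S' \<le> a^(k - card (J k)) * b^(card (J k)) * b" using c2 cS by (meson le_trans mult_le_mono1)
    also have "\<dots> = a^(Suc k - card (J (Suc k))) * b^(card (J (Suc k)))" using cJ by simp
    finally show ?thesis using finS' unfolding S'_def J_def by simp
  next
    case False
    have "(\<Sum>g\<in>S. card (F g)) \<le> (\<Sum>g\<in>S. a)"
      by (rule sum_mono) (use False cA in \<open>auto simp: F_def\<close>)
    then have c2: "card S' \<le> card S * a" using c1 by simp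
    have JS: "J (Suc k) = J k" unfolding J_def using False by (auto, metis Suc_lessI diff_Suc_1 less_antisym zero_less_Suc)
    have "card S' \<le> a^(k - card (J k)) * b^(card (J k)) * a" using c2 cS by (meson le_trans mult_le_mono1)
    also have "\<dots> = a^(Suc k - card (J (Suc k))) * b^(card (J (Suc k)))" using JS Jk
      by (simp add: Suc_diff_le)
    finally show ?thesis using finS' unfolding S'_def J_def by simp
  qed
qed



definition rows :: "nat \<Rightarrow> (nat \<Rightarrow> bool) set" where
  "rows n = {x. \<forall>j. n \<le> j \<longrightarrow> x j = False}"

definition close :: "nat \<Rightarrow> (nat \<Rightarrow> bool) \<Rightarrow> (nat \<Rightarrow> bool) \<Rightarrow> bool" where
  "close n x y = (\<exists>u<n. \<exists>v<n. \<forall>j<n-1. x (skip u j) = y (skip v j))"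

definition badR :: "nat \<Rightarrow> (nat \<Rightarrow> nat \<Rightarrow> bool) \<Rightarrow> nat set" where
  "badR n X = {i. Suc i < n \<and> close n (X i) (X (Suc i))}"

definition transp :: "(nat \<Rightarrow> nat \<Rightarrow> bool) \<Rightarrow> (nat \<Rightarrow> nat \<Rightarrow> bool)" where
  "transp X = (\<lambda>i j. X j i)"

definition badC :: "nat \<Rightarrow> (nat \<Rightarrow> nat \<Rightarrow> bool) \<Rightarrow> nat set" where
  "badC n X = badR n (transp X)"

lemma rows_seqset: "rows n = seqset False UNIV {} (\<lambda>_ _. True) n"
  unfolding rows_def seqset_def by auto

lemma rows_fin_card: "finite (rows n) \<and> card (rows n) \<le> 2^n"
proof -
  have "finite (seqset False (UNIV::bool set) {} (\<lambda>_ _. True) n) \<and>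
        card (seqset False (UNIV::bool set) {} (\<lambda>_ _. True) n) \<le> 2^(n - card {i\<in>{}. Suc i<n}) * 2^(card {i\<in>({}::nat set). Suc i<n})"
    by (rule seqset_card) auto
  then show ?thesis unfolding rows_seqset by simp
qed

lemma arrays_seqset: "arrays n = seqset (\<lambda>_. False) (rows n) B (\<lambda>_ _. True) n"
  unfolding arrays_def seqset_def rows_def by (auto simp: fun_eq_iff) (meson not_le)

lemma arrays_fin_card: "finite (arrays n) \<and> card (arrays n) \<le> 2^(n*n)"
proof -
  have "finite (seqset (\<lambda>_. False) (rows n) {} (\<lambda>_ _. True) n) \<and>
        card (seqset (\<lambda>_. False) (rows n) {} (\<lambda>_ _. True) n) \<le> (2^n)^(n - card {i\<in>{}. Suc i<n}) * (2^n)^(card {i\<in>({}::nat set). Suc i<n})"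
  proof (rule seqset_card)
    show "finite (rows n)" "card (rows n) \<le> 2^n" using rows_fin_card by auto
    show "card {y \<in> rows n. True} \<le> 2 ^ n" for x using rows_fin_card by auto
  qed
  then show ?thesis using arrays_seqset[of n "{}"] by (simp add: power_mult)
qed

lemma close_count:
  assumes "x \<in> rows n"
  shows "card {y\<in>rows n. close n x y} \<le> 2 * n^2"
proof -
  define g where "g = (\<lambda>(u,v,t). (\<lambda>k. if k < n then (if k = v then t else x (skip u (if k < v then k else k - 1))) else False))"
  have "{y\<in>rows n. close n x y} \<subseteq> g ` ({..<n} \<times> {..<n} \<times> (UNIV::bool set))"
  proof
    fix y assume y: "y \<in> {y\<in>rows n. close n x y}"
    then obtain u v where uv: "u < n" "v < n" "\<forall>j<n-1. x (skip u j) = y (skip v j)"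
      unfolding close_def by auto
    have "y = g (u, v, y v)"
    proof
      fix k
      show "y k = g (u, v, y v) k"
      proof (cases "k < n")
        case False then show ?thesis using y unfolding g_def rows_def by auto
      next
        case True
        show ?thesis
        proof (cases "k < v")
          case True
          then have "y k = y (skip v k)" by (simp add: skip_def)
          also have "\<dots> = x (skip u k)" using uv True by auto
          finally show ?thesis using True \<open>k < n\<close> unfolding g_def by auto
        next
          case False
          show ?thesis
          proof (cases "k = v")
            case True then show ?thesis using \<open>k < n\<close> unfolding g_def by auto
          next
            case False
            then have kv: "v < k" using \<open>\<not> k < v\<close> by auto
            have "skip v (k-1) = k" using kv by (simp add: skip_def)
            then have "y k = y (skip v (k-1))" by simp
            also have "\<dots> = x (skip u (k-1))" using uv kv \<open>k < n\<close> by auto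
            finally show ?thesis using kv \<open>k < n\<close> unfolding g_def by auto
          qed
        qed
      qed
    qed
    then show "y \<in> g ` ({..<n} \<times> {..<n} \<times> (UNIV::bool set))" using uv by blast
  qed
  then have "card {y\<in>rows n. close n x y} \<le> card (g ` ({..<n} \<times> {..<n} \<times> (UNIV::bool set)))"
    by (intro card_mono) auto
  also have "\<dots> \<le> card ({..<n} \<times> {..<n} \<times> (UNIV::bool set))" by (rule card_image_le) auto
  also have "\<dots> = 2 * n^2" by (simp add: card_cartesian_product power2_eq_square)
  finally show ?thesis .
qed

lemma badR_sub: "badR n X \<subseteq> {..<n}" unfolding badR_def by auto

lemma fixedB_count:
  assumes "B \<subseteq> {i. Suc i < n}"
  shows "card {X\<in>arrays n. B \<subseteq> badR n X} \<le> (2^n)^(n - card B) * (2*n^2)^(card B)"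
proof -
  have sub: "{X\<in>arrays n. B \<subseteq> badR n X} \<subseteq> seqset (\<lambda>_. False) (rows n) B (close n) n"
    unfolding arrays_seqset[of n B] seqset_def badR_def by auto
  have "finite (seqset (\<lambda>_. False) (rows n) B (close n) n) \<and>
        card (seqset (\<lambda>_. False) (rows n) B (close n) n) \<le> (2^n)^(n - card {i\<in>B. Suc i<n}) * (2*n^2)^(card {i\<in>B. Suc i<n})"
  proof (rule seqset_card)
    show "finite (rows n)" "card (rows n) \<le> 2^n" using rows_fin_card by auto
    show "card {y \<in> rows n. close n x y} \<le> 2 * n^2" if "x \<in> rows n" for x using close_count that .
  qed
  moreover have "{i\<in>B. Suc i<n} = B" using assms by auto
  ultimately show ?thesis using card_mono[OF _ sub] by (metis (no_types, lifting) le_trans)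
qed



lemma del_skip: "del_row_col n X r c = (\<lambda>i j. if i<n-1 \<and> j<n-1 then X (skip r i) (skip c j) else False)"
  unfolding del_row_col_def skip_def by simp

lemma row_collide:
  assumes "r < r'" "r' < n" "c < n" "c' < n" "del_row_col n X r c = del_row_col n X r' c'"
  shows "r \<in> badR n X"
proof -
  have "\<forall>j<n-1. X r (skip c' j) = X (Suc r) (skip c j)"
  proof (intro allI impI)
    fix j assume j: "j < n - 1"
    have "del_row_col n X r c r j = del_row_col n X r' c' r j" using assms(5) by simp
    moreover have "r < n - 1" using assms by auto
    ultimately have "X (skip r r) (skip c j) = X (skip r' r) (skip c' j)" using j unfolding del_skip by simp
    moreover have "skip r r = Suc r" "skip r' r = r" using assms by (auto simp: skip_def)
    ultimately show "X r (skip c' j) = X (Suc r) (skip c j)" by simp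
  qed
  then have "close n (X r) (X (Suc r))" unfolding close_def using assms by blast
  then show ?thesis unfolding badR_def using assms by auto
qed

lemma col_collide:
  assumes "c < c'" "c' < n" "r < n" "del_row_col n X r c = del_row_col n X r c'"
  shows "c \<in> badC n X"
proof -
  have "\<forall>j<n-1. transp X c (skip r j) = transp X (Suc c) (skip r j)"
  proof (intro allI impI)
    fix i assume i: "i < n - 1"
    have "del_row_col n X r c i c = del_row_col n X r c' i c" using assms(4) by simp
    moreover have "c < n - 1" using assms by auto
    ultimately have "X (skip r i) (skip c c) = X (skip r i) (skip c' c)" using i unfolding del_skip by simp
    moreover have "skip c c = Suc c" "skip c' c = c" using assms by (auto simp: skip_def)
    ultimately show "transp X c (skip r i) = transp X (Suc c) (skip r i)" unfolding transp_def by simp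
  qed
  then have "close n (transp X c) (transp X (Suc c))" unfolding close_def using assms by blast
  then show ?thesis unfolding badC_def badR_def using assms by auto
qed

lemma del_inj: "inj_on (\<lambda>(r,c). del_row_col n X r c) (({..<n} - badR n X) \<times> ({..<n} - badC n X))"
proof (rule inj_onI, clarify)
  fix r c r' c'
  assume r: "r < n" "r \<notin> badR n X" and c: "c < n" "c \<notin> badC n X"
    and r': "r' < n" "r' \<notin> badR n X" and c': "c' < n" "c' \<notin> badC n X"
    and eq: "del_row_col n X r c = del_row_col n X r' c'"
  have "r = r'"
  proof (rule ccontr)
    assume "r \<noteq> r'"
    then consider "r < r'" | "r' < r" by linarith
    then show False
    proof cases
      case 1 then show False using row_collide[OF 1 r'(1) c(1) c'(1) eq] r by auto
    next
      case 2 then show False using row_collide[OF 2 r(1) c'(1) c(1) eq[symmetric]] r' by auto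
    qed
  qed
  moreover have "c = c'"
  proof (rule ccontr)
    assume "c \<noteq> c'"
    then consider "c < c'" | "c' < c" by linarith
    then show False
    proof cases
      case 1 then show False using col_collide[OF 1 c'(1) r(1)] eq \<open>r = r'\<close> c by auto
    next
      case 2 then show False using col_collide[OF 2 c(1) r(1)] eq \<open>r = r'\<close> c' by auto
    qed
  qed
  ultimately show "r = r' \<and> c = c'" by simp
qed

lemma D11_image: "D11 n X = (\<lambda>(r,c). del_row_col n X r c) ` ({..<n} \<times> {..<n})"
  unfolding D11_def by auto

lemma D11_fin: "finite (D11 n X)" unfolding D11_image by auto

lemma D11_sub: "D11 n X \<subseteq> arrays (n-1)"
  unfolding D11_def arrays_def del_row_col_def by auto

lemma D11_lower: "(n - card (badR n X)) * (n - card (badC n X)) \<le> card (D11 n X)"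
proof -
  define S where "S = ({..<n} - badR n X) \<times> ({..<n} - badC n X)"
  have "card S = card ({..<n} - badR n X) * card ({..<n} - badC n X)"
    unfolding S_def by (simp add: card_cartesian_product)
  moreover have "n - card (badR n X) \<le> card ({..<n} - badR n X)"
    using diff_card_le_card_Diff[of "badR n X" "{..<n}"] finite_subset[OF badR_sub] by auto
  moreover have "n - card (badC n X) \<le> card ({..<n} - badC n X)"
    using diff_card_le_card_Diff[of "badC n X" "{..<n}"] finite_subset[OF badR_sub] unfolding badC_def by auto
  ultimately have "(n - card (badR n X)) * (n - card (badC n X)) \<le> card S"
    by (simp add: mult_le_mono)
  also have "card S = card ((\<lambda>(r,c). del_row_col n X r c) ` S)"
    using card_image[OF del_inj] unfolding S_def by simp
  also have "\<dots> \<le> card (D11 n X)"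
    by (intro card_mono D11_fin) (auto simp: S_def D11_image)
  finally show ?thesis .
qed

lemma badR_count:
  "card {X\<in>arrays n. m \<le> card (badR n X)} \<le> (n choose m) * ((2^n)^(n - m) * (2*n^2)^m)"
proof -
  define I where "I = {B. B \<subseteq> {..<n} \<and> card B = m}"
  define Q where "Q B = {X\<in>arrays n. B \<subseteq> badR n X}" for B
  have finI: "finite I" unfolding I_def by (rule finite_subset[of _ "Pow {..<n}"]) auto
  have cI: "card I = n choose m" unfolding I_def using n_subsets[of "{..<n}" m] by simp
  have sub: "{X\<in>arrays n. m \<le> card (badR n X)} \<subseteq> (\<Union>B\<in>I. Q B)"
  proof
    fix X assume X: "X \<in> {X\<in>arrays n. m \<le> card (badR n X)}"
    then obtain T where "T \<subseteq> badR n X" "card T = m" using obtain_subset_with_card_n[of m "badR n X"] by blast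
    then show "X \<in> (\<Union>B\<in>I. Q B)" using X badR_sub unfolding I_def Q_def by blast
  qed
  have finU: "finite (\<Union>B\<in>I. Q B)"
    by (rule finite_subset[of _ "arrays n"]) (use arrays_fin_card in \<open>auto simp: Q_def\<close>)
  have "card {X\<in>arrays n. m \<le> card (badR n X)} \<le> card (\<Union>B\<in>I. Q B)"
    by (rule card_mono[OF finU sub])
  also have "\<dots> \<le> (\<Sum>B\<in>I. card (Q B))" by (rule card_UN_le[OF finI])
  also have "\<dots> \<le> (\<Sum>B\<in>I. (2^n)^(n - m) * (2*n^2)^m)"
  proof (rule sum_mono)
    fix B assume B: "B \<in> I"
    show "card (Q B) \<le> (2^n)^(n - m) * (2*n^2)^m"
    proof (cases "B \<subseteq> {i. Suc i < n}")
      case True then show ?thesis using fixedB_count[OF True] B unfolding Q_def I_def by simp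
    next
      case False
      then have "Q B = {}" unfolding Q_def badR_def by auto
      then show ?thesis by simp
    qed
  qed
  also have "\<dots> = (n choose m) * ((2^n)^(n - m) * (2*n^2)^m)" using cI by simp
  finally show ?thesis .
qed

lemma transp_arrays: "X \<in> arrays n \<Longrightarrow> transp X \<in> arrays n"
  unfolding arrays_def transp_def by auto

lemma transp_transp: "transp (transp X) = X" unfolding transp_def by simp

lemma badC_count:
  "card {X\<in>arrays n. m \<le> card (badC n X)} \<le> card {X\<in>arrays n. m \<le> card (badR n X)}"
proof (rule card_inj_on_le[of transp])
  show "inj_on transp {X\<in>arrays n. m \<le> card (badC n X)}" by (metis inj_onI transp_transp)
  show "transp ` {X\<in>arrays n. m \<le> card (badC n X)} \<subseteq> {X\<in>arrays n. m \<le> card (badR n X)}"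
    using transp_arrays unfolding badC_def by auto
  show "finite {X\<in>arrays n. m \<le> card (badR n X)}" using arrays_fin_card by auto
qed



lemma code_count:
  assumes code: "criss_cross_11_code n C" and mn: "m < n"
  shows "finite C \<and> real (card C) \<le> 2^((n-1)*(n-1)) / real ((n-m)^2)
           + 2 * real (n choose m) * ((2^n)^(n-m) * (2*real n^2)^m)"
proof -
  have Csub: "C \<subseteq> arrays n" and disj: "\<forall>X\<in>C. \<forall>Y\<in>C. X \<noteq> Y \<longrightarrow> D11 n X \<inter> D11 n Y = {}"
    using code unfolding criss_cross_11_code_def by auto
  have finA: "finite (arrays n)" using arrays_fin_card by auto
  have finC: "finite C" using finite_subset[OF Csub finA] .
  define G where "G = {X\<in>arrays n. card (badR n X) < m \<and> card (badC n X) < m}"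
  define BR where "BR = {X\<in>arrays n. m \<le> card (badR n X)}"
  define BC where "BC = {X\<in>arrays n. m \<le> card (badC n X)}"
  define bnd where "bnd = (n choose m) * ((2^n)^(n - m) * (2*n^2)^m)"
  have cBR: "card BR \<le> bnd" unfolding BR_def bnd_def by (rule badR_count)
  have cBC: "card BC \<le> bnd" using badC_count[of n m] cBR unfolding BR_def BC_def by linarith
  have c0: "card C = card (C \<inter> G) + card (C - G)"
  proof -
    have "C = (C \<inter> G) \<union> (C - G)" by auto
    then have "card C = card ((C \<inter> G) \<union> (C - G))" by simp
    also have "\<dots> = card (C \<inter> G) + card (C - G)"
      by (rule card_Un_disjoint) (use finC in auto)
    finally show ?thesis .
  qed
  have "C - G \<subseteq> BR \<union> BC" using Csub unfolding G_def BR_def BC_def by auto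
  then have "card (C - G) \<le> card (BR \<union> BC)"
    by (intro card_mono) (use finA in \<open>auto simp: BR_def BC_def\<close>)
  also have "\<dots> \<le> card BR + card BC" by (rule card_Un_le)
  finally have c2: "card (C - G) \<le> 2 * bnd" using cBR cBC by linarith
  have low: "(n-m)^2 \<le> card (D11 n X)" if "X \<in> C \<inter> G" for X
  proof -
    have "n - m \<le> n - card (badR n X)" "n - m \<le> n - card (badC n X)" using that unfolding G_def by auto
    then have "(n-m)*(n-m) \<le> (n - card (badR n X)) * (n - card (badC n X))" by (rule mult_le_mono)
    then show ?thesis using D11_lower[of n X] by (simp add: power2_eq_square)
  qed
  have "card (C \<inter> G) * (n-m)^2 = (\<Sum>X\<in>C \<inter> G. (n-m)^2)" by simp
  also have "\<dots> \<le> (\<Sum>X\<in>C \<inter> G. card (D11 n X))" by (rule sum_mono) (use low in auto)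
  also have "\<dots> = card (\<Union>X\<in>C \<inter> G. D11 n X)"
    by (rule card_UN_disjoint[symmetric]) (use finC disj D11_fin in auto)
  also have "\<dots> \<le> card (arrays (n-1))"
    by (intro card_mono) (use arrays_fin_card D11_sub in auto)
  also have "\<dots> \<le> 2^((n-1)*(n-1))" using arrays_fin_card by auto
  finally have c3: "card (C \<inter> G) * (n-m)^2 \<le> 2^((n-1)*(n-1))" .
  have pos: "0 < real ((n-m)^2)" using mn by simp
  have r3: "real (card (C \<inter> G)) \<le> 2^((n-1)*(n-1)) / real ((n-m)^2)"
  proof -
    have "real (card (C \<inter> G)) * real ((n-m)^2) \<le> 2^((n-1)*(n-1))"
      using c3 by (metis of_nat_le_iff of_nat_mult of_nat_numeral of_nat_power)
    then show ?thesis using pos by (simp add: pos_le_divide_eq)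
  qed
  have r2: "real (card (C - G)) \<le> 2 * real (n choose m) * ((2^n)^(n-m) * (2*real n^2)^m)"
  proof -
    have "real (card (C - G)) \<le> real (2 * bnd)" using c2 by linarith
    then show ?thesis unfolding bnd_def by simp
  qed
  show ?thesis using finC c0 r2 r3 by simp
qed



lemma sq_le_pow2: "n \<ge> 7 \<Longrightarrow> 2 * n^2 \<le> (2::nat)^n"
proof (induction n rule: dec_induct)
  case base then show ?case by simp
next
  case (step k)
  have "2 * (Suc k)^2 = 2*k^2 + 4*k + 2" by (simp add: power2_eq_square)
  also have "\<dots> \<le> 2 * (2 * k^2)"
  proof -
    have "7 * k \<le> k * k" using step(1) by simp
    then have "4 * k + 2 \<le> 2 * (k * k)" using step(1) by linarith
    then show ?thesis by (simp add: power2_eq_square)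
  qed
  also have "\<dots> \<le> 2 * 2^k" using step(3) by simp
  finally show ?case by simp
qed

definition eps :: "nat \<Rightarrow> real" where
  "eps n = real n^2 * 2^(3*n) * (2*real n^2)^(n div 4) / 2^(n*(n div 4))"

lemma eps_nonneg: "eps n \<ge> 0" unfolding eps_def by simp

lemma eps_lim: "eps \<longlonglongrightarrow> 0"
proof (rule tendsto_sandwich[of "\<lambda>_. 0" _ _ "\<lambda>n::nat. real n^2 * 2^(3*n) * (2*real n^2/2^n) powr ((real n - 3)/4)"])
  show "\<forall>\<^sub>F n in sequentially. 0 \<le> eps n" using eps_nonneg by simp
  show "(\<lambda>_. 0::real) \<longlonglongrightarrow> 0" by simp
  show "(\<lambda>n::nat. real n^2 * 2^(3*n) * (2*real n^2/2^n) powr ((real n - 3)/4)) \<longlonglongrightarrow> 0" by real_asymp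
  show "\<forall>\<^sub>F n in sequentially. eps n \<le> real n^2 * 2^(3*n) * (2*real n^2/2^n) powr ((real n - 3)/4)"
  proof (rule eventually_sequentiallyI[of 7])
    fix n :: nat assume n: "7 \<le> n"
    define q where "q = 2*real n^2/2^n"
    have qpos: "0 < q" using n unfolding q_def by simp
    have q1: "q \<le> 1"
    proof -
      have "real (2*n^2) \<le> real ((2::nat)^n)" using sq_le_pow2[OF n] by linarith
      then show ?thesis unfolding q_def by simp
    qed
    have "(2*real n^2)^(n div 4) / 2^(n*(n div 4)) = q^(n div 4)"
      unfolding q_def by (simp add: power_divide power_mult)
    also have "\<dots> = q powr real (n div 4)" using qpos by (simp add: powr_realpow)
    also have "\<dots> \<le> q powr ((real n - 3)/4)"
    proof (rule powr_mono')
      show "(real n - 3)/4 \<le> real (n div 4)"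
      proof -
        have "n \<le> 4 * (n div 4) + 3" by linarith
        then have "real n \<le> 4 * real (n div 4) + 3" by linarith
        then show ?thesis by simp
      qed
    qed (use qpos q1 in auto)
    finally have "(2*real n^2)^(n div 4) / 2^(n*(n div 4)) \<le> q powr ((real n - 3)/4)" .
    then have "real n^2 * 2^(3*n) * ((2*real n^2)^(n div 4) / 2^(n*(n div 4))) \<le> real n^2 * 2^(3*n) * q powr ((real n - 3)/4)"
      by (intro mult_left_mono) auto
    then show "eps n \<le> real n^2 * 2^(3*n) * (2*real n^2/2^n) powr ((real n - 3)/4)"
      unfolding eps_def q_def by simp
  qed
qed



lemma main_bound:
  assumes n: "1 \<le> n" and code: "criss_cross_11_code n C"
  shows "finite C \<and> real (card C) \<le> (1 + eps n) * 2 ^ (n^2) / (2 ^ (2*n - 1) * (real (n^2) / 2))"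
proof -
  define m where "m = n div 4"
  have mn: "m < n" using n unfolding m_def by simp
  have m4: "4 * m \<le> n" unfolding m_def by simp
  have cc: "finite C \<and> real (card C) \<le> 2^((n-1)*(n-1)) / real ((n-m)^2)
           + 2 * real (n choose m) * ((2^n)^(n-m) * (2*real n^2)^m)"
    using code_count[OF code mn] .
  define D :: real where "D = 2 ^ (2*n - 1) * (real (n^2) / 2)"
  define P :: real where "P = 2 ^ (n^2)"
  have Dpos: "0 < D" using n unfolding D_def by simp
  have e1: "(n-1)*(n-1) + (2*n-1) = n^2"
  proof -
    obtain k where k: "n = Suc k" using n by (cases n) auto
    show ?thesis unfolding k by (simp add: power2_eq_square)
  qed
  have P1: "(2::real)^((n-1)*(n-1)) * 2^(2*n-1) = P"
  proof -
    have "(2::real)^((n-1)*(n-1)) * 2^(2*n-1) = 2^((n-1)*(n-1) + (2*n-1))" by (rule power_add[symmetric])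
    also have "\<dots> = P" unfolding e1 P_def ..
    finally show ?thesis .
  qed
  have sq: "real n^2 \<le> 2 * real (n-m)^2"
  proof -
    have "3 * real n \<le> 4 * real (n-m)" using m4 mn by (simp add: of_nat_diff)
    then have "(3 * real n)^2 \<le> (4 * real (n-m))^2" by (intro power_mono) auto
    then have "9 * real n^2 \<le> 16 * real (n-m)^2" by (simp add: power_mult_distrib)
    moreover have "0 \<le> real n^2" by simp
    ultimately show ?thesis by linarith
  qed
  have a1: "2^((n-1)*(n-1)) / real ((n-m)^2) \<le> P / D"
  proof -
    have "2^((n-1)*(n-1)) / real ((n-m)^2) * D = P * (real n^2 / (2 * real (n-m)^2))"
      unfolding D_def using P1[symmetric] by (simp add: field_simps)
    also have "\<dots> \<le> P * 1"
      by (intro mult_left_mono) (use sq mn in \<open>auto simp: P_def\<close>)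
    finally show ?thesis using Dpos by (simp add: pos_le_divide_eq)
  qed
  have ex: "n + n*(n-m) + (2*n-1) + n*m \<le> 3*n + n^2"
  proof -
    have "n*(n-m) + n*m = n*n" using mn by (simp add: diff_mult_distrib2)
    then show ?thesis by (simp add: power2_eq_square)
  qed
  have key2: "(2::real)^n * (2^n)^(n-m) * 2^(2*n-1) * 2^(n*m) \<le> 2^(3*n) * 2^(n^2)"
  proof -
    have "(2::real)^n * (2^n)^(n-m) * 2^(2*n-1) * 2^(n*m) = 2^(n + n*(n-m) + (2*n-1) + n*m)"
      by (simp add: power_add power_mult)
    also have "\<dots> \<le> 2^(3*n + n^2)" by (rule power_increasing[OF ex]) simp
    also have "\<dots> = 2^(3*n) * 2^(n^2)" by (simp add: power_add)
    finally show ?thesis .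
  qed
  have a2: "2 * real (n choose m) * ((2^n)^(n-m) * (2*real n^2)^m) \<le> eps n * P / D"
  proof -
    define W where "W = (2*real n^2)^m * real n^2"
    have W0: "0 \<le> W" unfolding W_def by simp
    have ch: "real (n choose m) \<le> 2^n"
      using binomial_le_pow2[of n m] by (metis of_nat_le_iff of_nat_numeral of_nat_power)
    have "2 * real (n choose m) * ((2^n)^(n-m) * (2*real n^2)^m) * D
          = real (n choose m) * (2^n)^(n-m) * 2^(2*n-1) * W"
      unfolding D_def W_def by (simp add: field_simps)
    also have "\<dots> \<le> 2^n * (2^n)^(n-m) * 2^(2*n-1) * W"
      by (intro mult_right_mono ch W0) auto
    also have "\<dots> = (2^n * (2^n)^(n-m) * 2^(2*n-1) * 2^(n*m)) * W / 2^(n*m)" by simp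
    also have "\<dots> \<le> (2^(3*n) * 2^(n^2)) * W / 2^(n*m)"
      by (intro divide_right_mono mult_right_mono key2 W0) auto
    also have "\<dots> = eps n * P"
      unfolding eps_def P_def W_def m_def by (simp add: field_simps)
    finally show ?thesis using Dpos by (simp add: pos_le_divide_eq)
  qed
  have "real (card C) \<le> P / D + eps n * P / D" using cc a1 a2 by linarith
  also have "\<dots> = (1 + eps n) * P / D" by (simp add: distrib_right add_divide_distrib)
  finally show ?thesis using cc unfolding P_def D_def by simp
qed

theorem theorem2:
  "\<exists>\<epsilon> :: nat \<Rightarrow> real. (\<forall>n. \<epsilon> n \<ge> 0) \<and> \<epsilon> \<longlonglongrightarrow> 0 \<and>
     (\<forall>n C. 1 \<le> n \<longrightarrow> criss_cross_11_code n C \<longrightarrow>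
        real (card C) \<le> (1 + \<epsilon> n) * 2 ^ (n^2) / (2 ^ (2*n - 1) * (real (n^2) / 2))
      \<and> (C \<noteq> {} \<longrightarrow>
        real (n^2) - log 2 (real (card C)) \<ge> real (2*n) - 2 + 2 * log 2 (real n) - log 2 (1 + \<epsilon> n)))"
proof (intro exI[of _ eps] conjI allI impI)
  show "\<And>n. eps n \<ge> 0" by (rule eps_nonneg)
  show "eps \<longlonglongrightarrow> 0" by (rule eps_lim)
  fix n :: nat and C
  assume n: "1 \<le> n" and code: "criss_cross_11_code n C"
  show bnd: "real (card C) \<le> (1 + eps n) * 2 ^ (n^2) / (2 ^ (2*n - 1) * (real (n^2) / 2))"
    using main_bound[OF n code] by simp
  assume ne: "C \<noteq> {}"
  have fin: "finite C" using main_bound[OF n code] by simp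
  have cpos: "0 < real (card C)" using fin ne by (simp add: card_gt_0_iff)
  have e0: "0 \<le> eps n" by (rule eps_nonneg)
  have npos: "0 < real n" using n by simp
  have "log 2 (real (card C)) \<le> log 2 ((1 + eps n) * 2 ^ (n^2) / (2 ^ (2*n - 1) * (real (n^2) / 2)))"
    using bnd cpos by (subst log_le_cancel_iff) (use e0 npos in auto)
  also have "\<dots> = log 2 (1 + eps n) + real (n^2) - (real (2*n - 1) + (2 * log 2 (real n) - 1))"
  proof -
    have l1: "log 2 ((2::real) ^ (n^2)) = real (n^2)" by (simp add: log_nat_power)
    have l2: "log 2 ((2::real) ^ (2*n-1)) = real (2*n-1)" by (simp add: log_nat_power)
    have l3: "log 2 (real (n^2) / 2) = 2 * log 2 (real n) - 1"
    proof -
      have "log 2 (real (n^2)) = 2 * log 2 (real n)"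
        unfolding of_nat_power using log_nat_power[of "real n" 2 2] npos by simp
      then show ?thesis using npos by (simp add: log_divide del: of_nat_power)
    qed
    have gen: "log 2 (a*b/(c*d)) = log 2 a + log 2 b - (log 2 c + log 2 d)"
      if "0 < a" "0 < b" "0 < c" "0 < d" for a b c d :: real
      using that by (simp add: log_mult log_divide)
    have "log 2 ((1 + eps n) * 2 ^ (n^2) / (2 ^ (2*n - 1) * (real (n^2) / 2)))
        = log 2 (1 + eps n) + log 2 ((2::real) ^ (n^2)) - (log 2 ((2::real) ^ (2*n-1)) + log 2 (real (n^2) / 2))"
      by (rule gen) (use e0 npos in auto)
    then show ?thesis unfolding l1 l2 l3 .
  qed
  finally have "log 2 (real (card C)) \<le> log 2 (1 + eps n) + real (n^2) - (real (2*n - 1) + (2 * log 2 (real n) - 1))" .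
  moreover have "real (2*n - 1) = real (2*n) - 1" using n by (simp add: of_nat_diff)
  ultimately show "real (n^2) - log 2 (real (card C)) \<ge> real (2*n) - 2 + 2 * log 2 (real n) - log 2 (1 + eps n)"
    by linarith
qed

end
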